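(* Let $X$ be a spectral space and let $Y\subseteq X$. (1) Suppose that $\sup(F)$ exists in $X$ for every nonempty finite subset $F\subseteq Y$. Then $\sup(Z)$ exists for every nonempty subset $Z\subseteq Y$, and $Y_\infty\subseteq\mathrm{Cl}^\mathrm{cons}(Y_f)$. (2) Suppose that $\inf(F)$ exists in $X$ for every nonempty finite subset $F\subseteq Y$. Then $\inf(Z)$ exists for every nonempty subset $Z\subseteq Y$, and $Y_{(\infty)}\subseteq\mathrm{Cl}^\mathrm{cons}(Y_{(f)})$.
   Context: A spectral space is a topological space homeomorphic to the prime spectrum of a commutative unitary ring with the Zariski topology. On a spectral space $X$ the specialization order is defined by $x\leq y$ iff $y\in\mathrm{Cl}(\{x\})$; it is a partial order, and $\sup$, $\inf$ refer to this order. The constructible topology on $X$ is the coarsest topology for which every open and quasi-compact subset of $X$ is clopen; $\mathrm{Cl}^\mathrm{cons}$ denotes closure in it. For $Y\subseteq X$: $Y_f$ is the set of all $\sup(F)$ with $F\subseteq Y$ nonempty finite (whenever the supremum exists), $Y_\infty$ the set of all existing $\sup(Z)$ with $\emptyset\neq Z\subseteq Y$; $Y_{(f)}$ and $Y_{(\infty)}$ are defined in the same way with infima instead of suprema. *)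

theory Defs
  imports "HOL-Analysis.Analysis" "HOL-Algebra.Ideal"
begin

definition Spec :: "('b, 'c) ring_scheme \<Rightarrow> 'b set set" where
  "Spec R = {P. primeideal P R}"

definition zariski :: "('b, 'c) ring_scheme \<Rightarrow> 'b set topology" where
  "zariski R = topology_generated_by {{P \<in> Spec R. f \<notin> P} | f. f \<in> carrier R}"

definition spec_le :: "'a topology \<Rightarrow> 'a \<Rightarrow> 'a \<Rightarrow> bool" where
  "spec_le X x y \<longleftrightarrow> x \<in> topspace X \<and> y \<in> X closure_of {x}"

definition is_sup :: "'a topology \<Rightarrow> 'a set \<Rightarrow> 'a \<Rightarrow> bool" where
  "is_sup X Z s \<longleftrightarrow> s \<in> topspace X \<and> (\<forall>z\<in>Z. spec_le X z s) \<and>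
     (\<forall>u\<in>topspace X. (\<forall>z\<in>Z. spec_le X z u) \<longrightarrow> spec_le X s u)"

definition is_inf :: "'a topology \<Rightarrow> 'a set \<Rightarrow> 'a \<Rightarrow> bool" where
  "is_inf X Z s \<longleftrightarrow> s \<in> topspace X \<and> (\<forall>z\<in>Z. spec_le X s z) \<and>
     (\<forall>u\<in>topspace X. (\<forall>z\<in>Z. spec_le X u z) \<longrightarrow> spec_le X u s)"

definition sup_fin :: "'a topology \<Rightarrow> 'a set \<Rightarrow> 'a set" where
  "sup_fin X Y = {s. \<exists>F. F \<subseteq> Y \<and> F \<noteq> {} \<and> finite F \<and> is_sup X F s}"

definition sup_all :: "'a topology \<Rightarrow> 'a set \<Rightarrow> 'a set" where
  "sup_all X Y = {s. \<exists>Z. Z \<subseteq> Y \<and> Z \<noteq> {} \<and> is_sup X Z s}"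

definition inf_fin :: "'a topology \<Rightarrow> 'a set \<Rightarrow> 'a set" where
  "inf_fin X Y = {s. \<exists>F. F \<subseteq> Y \<and> F \<noteq> {} \<and> finite F \<and> is_inf X F s}"

definition inf_all :: "'a topology \<Rightarrow> 'a set \<Rightarrow> 'a set" where
  "inf_all X Y = {s. \<exists>Z. Z \<subseteq> Y \<and> Z \<noteq> {} \<and> is_inf X Z s}"

text \<open>Constructible topology: coarsest topology in which every open
  quasi-compact set is clopen, i.e. generated by these sets and their complements.\<close>

definition cons_topology :: "'a topology \<Rightarrow> 'a topology" where
  "cons_topology X = topology_generated_by
     ({U. openin X U \<and> compactin X U} \<union> {topspace X - U | U. openin X U \<and> compactin X U})"

end

theory Submission
  imports Defs
begin


lemma directed_union_prime:
  fixes R (structure)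
  assumes cr: "cring R" and ne: "PP \<noteq> {}" and pr: "\<And>P. P \<in> PP \<Longrightarrow> primeideal P R"
    and dir: "\<And>P Q. P \<in> PP \<Longrightarrow> Q \<in> PP \<Longrightarrow> \<exists>M\<in>PP. P \<subseteq> M \<and> Q \<subseteq> M"
  shows "primeideal (\<Union>PP) R"
proof -
  interpret cring R by fact
  have idl: "\<And>P. P \<in> PP \<Longrightarrow> ideal P R" using pr primeideal.axioms(1) by blast
  have "ideal (\<Union>PP) R"
  proof (rule idealI[OF ring_axioms])
    show "subgroup (\<Union>PP) (add_monoid R)"
    proof
      show "\<Union>PP \<subseteq> carrier (add_monoid R)"
        using idl additive_subgroup.a_subset ideal.axioms(1) by fastforce
      obtain I where I: "I \<in> PP" using ne by auto
      thus "\<one>\<^bsub>add_monoid R\<^esub> \<in> \<Union>PP"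
        using additive_subgroup.zero_closed[OF ideal.axioms(1)[OF idl[OF I]]] by auto
    next
      fix x y assume "x \<in> \<Union>PP" "y \<in> \<Union>PP"
      then obtain I J where "I \<in> PP" "J \<in> PP" "x \<in> I" "y \<in> J" by blast
      then obtain M where M: "M \<in> PP" "x \<in> M" "y \<in> M" using dir by blast
      thus "x \<otimes>\<^bsub>add_monoid R\<^esub> y \<in> \<Union>PP"
        using UnionI idl[OF M(1)] additive_subgroup.a_closed unfolding ideal_def by fastforce
    next
      fix x assume "x \<in> \<Union>PP"
      then obtain I where I: "I \<in> PP" "x \<in> I" by blast
      show "inv\<^bsub>add_monoid R\<^esub> x \<in> \<Union>PP"
        using UnionI I additive_subgroup.a_inv_closed idl[OF I(1)] unfolding ideal_def a_inv_def by metis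
    qed
  next
    fix a x assume a: "a \<in> \<Union>PP" and x: "x \<in> carrier R"
    then obtain I where I: "ideal I R" "a \<in> I" and "I \<in> PP" using idl by auto
    thus "x \<otimes> a \<in> \<Union>PP" and "a \<otimes> x \<in> \<Union>PP"
      using ideal.I_l_closed[OF I x] ideal.I_r_closed[OF I x] by auto
  qed
  moreover have "\<one> \<notin> \<Union>PP"
  proof
    assume "\<one> \<in> \<Union>PP"
    then obtain I where I: "I \<in> PP" "\<one> \<in> I" by blast
    then have "I = carrier R" using ideal.one_imp_carrier idl by blast
    thus False using primeideal.I_notcarr pr I(1) by blast
  qed
  ultimately show ?thesis
  proof (intro primeidealI cr)
    show "carrier R \<noteq> \<Union>PP" using \<open>\<one> \<notin> \<Union>PP\<close> by auto
  next
    fix a b assume ab: "a \<in> carrier R" "b \<in> carrier R" "a \<otimes> b \<in> \<Union>PP"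
    then obtain I where I: "I \<in> PP" "a \<otimes> b \<in> I" by blast
    have "a \<in> I \<or> b \<in> I" using primeideal.I_prime[OF pr[OF I(1)] ab(1,2) I(2)] .
    thus "a \<in> \<Union>PP \<or> b \<in> \<Union>PP" using I(1) by blast
  qed
qed

lemma codirected_inter_prime:
  fixes R (structure)
  assumes cr: "cring R" and ne: "PP \<noteq> {}" and pr: "\<And>P. P \<in> PP \<Longrightarrow> primeideal P R"
    and dir: "\<And>P Q. P \<in> PP \<Longrightarrow> Q \<in> PP \<Longrightarrow> \<exists>M\<in>PP. M \<subseteq> P \<and> M \<subseteq> Q"
  shows "primeideal (\<Inter>PP) R"
proof -
  interpret cring R by fact
  have idl: "\<And>P. P \<in> PP \<Longrightarrow> ideal P R" using pr primeideal.axioms(1) by blast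
  have "ideal (\<Inter>PP) R" using i_Intersect idl ne by blast
  moreover have "\<one> \<notin> \<Inter>PP"
  proof
    assume "\<one> \<in> \<Inter>PP"
    then obtain I where I: "I \<in> PP" "\<one> \<in> I" using ne by blast
    then have "I = carrier R" using ideal.one_imp_carrier idl by blast
    thus False using primeideal.I_notcarr pr I(1) by blast
  qed
  ultimately show ?thesis
  proof (intro primeidealI cr)
    show "carrier R \<noteq> \<Inter>PP" using \<open>\<one> \<notin> \<Inter>PP\<close> by auto
  next
    fix a b assume ab: "a \<in> carrier R" "b \<in> carrier R" "a \<otimes> b \<in> \<Inter>PP"
    show "a \<in> \<Inter>PP \<or> b \<in> \<Inter>PP"
    proof (rule ccontr)
      assume "\<not> ?thesis"
      then obtain P Q where PQ: "P \<in> PP" "Q \<in> PP" "a \<notin> P" "b \<notin> Q" by blast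
      then obtain M where M: "M \<in> PP" "M \<subseteq> P" "M \<subseteq> Q" using dir by blast
      have "a \<otimes> b \<in> M" using ab M by blast
      then have "a \<in> M \<or> b \<in> M" using primeideal.I_prime[OF pr[OF M(1)] ab(1,2)] by simp
      thus False using M PQ by blast
    qed
  qed
qed

lemma zar_top:
  fixes R (structure)
  assumes "cring R" shows "topspace (zariski R) = Spec R"
proof -
  interpret cring R by fact
  have "P \<in> {P \<in> Spec R. \<one> \<notin> P}" if "P \<in> Spec R" for P
  proof -
    have pr: "primeideal P R" using that by (simp add: Spec_def)
    have "\<one> \<notin> P" using ideal.one_imp_carrier primeideal.axioms(1)[OF pr] primeideal.I_notcarr[OF pr] by blast
    thus ?thesis using that by blast
  qed
  then show ?thesis unfolding zariski_def topology_generated_by_topspace by blast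
qed

lemma zar_open:
  fixes R (structure)
  assumes cr: "cring R" and W: "openin (zariski R) W"
  shows "\<forall>Q\<in>W. Q \<in> Spec R \<and> (\<exists>g\<in>carrier R. g \<notin> Q \<and> {P \<in> Spec R. g \<notin> P} \<subseteq> W)"
proof -
  interpret cring R by fact
  have "generate_topology_on {{P \<in> Spec R. f \<notin> P} | f. f \<in> carrier R} W"
    using W unfolding zariski_def by (rule openin_topology_generated_by)
  then show ?thesis
  proof (induction rule: generate_topology_on.induct)
    case Empty then show ?case by simp
  next
    case (Int a b)
    show ?case
    proof
      fix Q assume Q: "Q \<in> a \<inter> b"
      then have Qa: "Q \<in> a" and Qb: "Q \<in> b" by auto
      obtain g1 where g1: "g1 \<in> carrier R" "g1 \<notin> Q" "{P \<in> Spec R. g1 \<notin> P} \<subseteq> a"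
        and QS: "Q \<in> Spec R"
        using Int.IH(1) Qa by blast
      obtain g2 where g2: "g2 \<in> carrier R" "g2 \<notin> Q" "{P \<in> Spec R. g2 \<notin> P} \<subseteq> b"
        using Int.IH(2) Qb by blast
      note g = g1 g2
      have prQ: "primeideal Q R" using QS by (simp add: Spec_def)
      have "g1 \<otimes> g2 \<notin> Q"
      proof
        assume "g1 \<otimes> g2 \<in> Q"
        then have "g1 \<in> Q \<or> g2 \<in> Q" using primeideal.I_prime[OF prQ g1(1) g2(1)] by simp
        then show False using g1 g2 by simp
      qed
      moreover have "{P \<in> Spec R. g1 \<otimes> g2 \<notin> P} \<subseteq> a \<inter> b"
      proof
        fix P assume P: "P \<in> {P \<in> Spec R. g1 \<otimes> g2 \<notin> P}"
        then have pr: "primeideal P R" by (simp add: Spec_def)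
        have "g1 \<notin> P" using ideal.I_r_closed[OF primeideal.axioms(1)[OF pr], of g1 g2] g P by auto
        moreover have "g2 \<notin> P" using ideal.I_l_closed[OF primeideal.axioms(1)[OF pr], of g2 g1] g P by auto
        ultimately show "P \<in> a \<inter> b" using g1(3) g2(3) P by blast
      qed
      ultimately show "Q \<in> Spec R \<and> (\<exists>g\<in>carrier R. g \<notin> Q \<and> {P \<in> Spec R. g \<notin> P} \<subseteq> a \<inter> b)"
        using QS m_closed[OF g1(1) g2(1)] by blast
    qed
  next
    case (UN K)
    show ?case
    proof
      fix Q assume "Q \<in> \<Union>K"
      then obtain k where k: "k \<in> K" "Q \<in> k" by blast
      then have "Q \<in> Spec R \<and> (\<exists>g\<in>carrier R. g \<notin> Q \<and> {P \<in> Spec R. g \<notin> P} \<subseteq> k)"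
        using UN.IH[OF k(1)] by blast
      then show "Q \<in> Spec R \<and> (\<exists>g\<in>carrier R. g \<notin> Q \<and> {P \<in> Spec R. g \<notin> P} \<subseteq> \<Union>K)"
        using k(1) by blast
    qed
  next
    case (Basis s)
    then obtain f where f: "f \<in> carrier R" "s = {P \<in> Spec R. f \<notin> P}" by blast
    then show ?case by auto
  qed
qed

lemma zar_closure:
  fixes R (structure)
  assumes cr: "cring R" and P: "P \<in> Spec R" and Q: "Q \<in> Spec R"
  shows "Q \<in> zariski R closure_of {P} \<longleftrightarrow> P \<subseteq> Q"
proof
  assume PQ: "P \<subseteq> Q"
  have "\<exists>y. y \<in> {P} \<and> y \<in> T" if T1: "Q \<in> T" and T2: "openin (zariski R) T" for T
  proof -
    have "\<forall>Q\<in>T. Q \<in> Spec R \<and> (\<exists>g\<in>carrier R. g \<notin> Q \<and> {P \<in> Spec R. g \<notin> P} \<subseteq> T)"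
      using zar_open[OF cr T2] .
    then obtain g where g: "g \<in> carrier R" "g \<notin> Q" "{P \<in> Spec R. g \<notin> P} \<subseteq> T"
      using T1 by auto
    have "g \<notin> P" using g(2) PQ by auto
    then have "P \<in> {P \<in> Spec R. g \<notin> P}" using P by simp
    then have "P \<in> T" using g(3) by (rule subsetD[rotated])
    then show ?thesis by simp
  qed
  moreover have "Q \<in> topspace (zariski R)" using zar_top[OF cr] Q by simp
  ultimately show "Q \<in> zariski R closure_of {P}"
    unfolding in_closure_of by simp
next
  assume cl: "Q \<in> zariski R closure_of {P}"
  show "P \<subseteq> Q"
  proof (rule ccontr)
    assume "\<not> P \<subseteq> Q"
    then obtain a where a: "a \<in> P" "a \<notin> Q" by blast
    have pr: "primeideal P R" using P by (simp add: Spec_def)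
    have "P \<subseteq> carrier R"
      using additive_subgroup.a_subset[OF ideal.axioms(1)[OF primeideal.axioms(1)[OF pr]]] .
    then have ac: "a \<in> carrier R" using a(1) by blast
    have "{P \<in> Spec R. a \<notin> P} \<in> {{P \<in> Spec R. f \<notin> P} | f. f \<in> carrier R}"
      using ac by auto
    then have op: "openin (zariski R) {P \<in> Spec R. a \<notin> P}"
      unfolding zariski_def by (rule topology_generated_by_Basis)
    have Qin: "Q \<in> {P \<in> Spec R. a \<notin> P}" using Q a(2) by simp
    have "\<forall>T. Q \<in> T \<and> openin (zariski R) T \<longrightarrow> (\<exists>y. y \<in> {P} \<and> y \<in> T)"
      using cl unfolding in_closure_of by simp
    from this[rule_format, OF conjI[OF Qin op]] 
    show False using a(1) by simp
  qed
qed




definition ev :: "'a set \<Rightarrow> ('a set \<Rightarrow> 'x) \<Rightarrow> 'x set \<Rightarrow> bool" where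
  "ev Z p W \<longleftrightarrow> (\<exists>F0. F0 \<subseteq> Z \<and> F0 \<noteq> {} \<and> finite F0 \<and> (\<forall>F. F0 \<subseteq> F \<and> F \<subseteq> Z \<and> finite F \<longrightarrow> p F \<in> W))"

lemma evI:
  assumes "F0 \<subseteq> Z" "F0 \<noteq> {}" "finite F0" "\<And>F. F0 \<subseteq> F \<Longrightarrow> F \<subseteq> Z \<Longrightarrow> finite F \<Longrightarrow> p F \<in> W"
  shows "ev Z p W"
  unfolding ev_def by (rule exI[of _ F0]) (use assms in auto)

lemma evE:
  assumes "ev Z p W"
  obtains F0 where "F0 \<subseteq> Z" "F0 \<noteq> {}" "finite F0" "\<And>F. F0 \<subseteq> F \<Longrightarrow> F \<subseteq> Z \<Longrightarrow> finite F \<Longrightarrow> p F \<in> W"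
proof -
  obtain F0 where F0: "F0 \<subseteq> Z" "F0 \<noteq> {}" "finite F0" "\<forall>F. F0 \<subseteq> F \<and> F \<subseteq> Z \<and> finite F \<longrightarrow> p F \<in> W"
    using assms unfolding ev_def by (elim exE conjE)
  show thesis by (rule that[OF F0(1-3)]) (use F0(4) in auto)
qed

lemma ev_Int:
  assumes "ev Z p a" "ev Z p b" shows "ev Z p (a \<inter> b)"
proof -
  obtain F1 where F1: "F1 \<subseteq> Z" "F1 \<noteq> {}" "finite F1" "\<And>F. F1 \<subseteq> F \<Longrightarrow> F \<subseteq> Z \<Longrightarrow> finite F \<Longrightarrow> p F \<in> a"
    using assms(1) by (elim evE) blast
  obtain F2 where F2: "F2 \<subseteq> Z" "F2 \<noteq> {}" "finite F2" "\<And>F. F2 \<subseteq> F \<Longrightarrow> F \<subseteq> Z \<Longrightarrow> finite F \<Longrightarrow> p F \<in> b"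
    using assms(2) by (elim evE) blast
  show ?thesis
  proof (rule evI[of "F1 \<union> F2"])
    show "F1 \<union> F2 \<subseteq> Z" using F1(1) F2(1) by simp
    show "F1 \<union> F2 \<noteq> {}" using F1(2) by simp
    show "finite (F1 \<union> F2)" using F1(3) F2(3) by simp
    fix F assume F: "F1 \<union> F2 \<subseteq> F" "F \<subseteq> Z" "finite F"
    have "p F \<in> a" using F1(4)[of F] F by simp
    moreover have "p F \<in> b" using F2(4)[of F] F by simp
    ultimately show "p F \<in> a \<inter> b" by simp
  qed
qed

lemma ev_mono:
  assumes "ev Z p a" "a \<subseteq> b" shows "ev Z p b"
proof -
  obtain F1 where F1: "F1 \<subseteq> Z" "F1 \<noteq> {}" "finite F1" "\<And>F. F1 \<subseteq> F \<Longrightarrow> F \<subseteq> Z \<Longrightarrow> finite F \<Longrightarrow> p F \<in> a"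
    using assms(1) by (elim evE) blast
  show ?thesis
  proof (rule evI[of F1])
    fix F assume F: "F1 \<subseteq> F" "F \<subseteq> Z" "finite F"
    show "p F \<in> b" using F1(4)[OF F] assms(2) by (rule subsetD[rotated])
  qed (use F1 in auto)
qed

lemma gen_ev:
  assumes "generate_topology_on B W" "\<And>W. W \<in> B \<Longrightarrow> s \<in> W \<Longrightarrow> ev Z p W"
  shows "s \<in> W \<longrightarrow> ev Z p W"
  using assms(1)
proof (induction rule: generate_topology_on.induct)
  case Empty then show ?case by simp
next
  case (Int a b) then show ?case by (auto intro: ev_Int)
next
  case (UN K)
  show ?case
  proof
    assume "s \<in> \<Union>K"
    then obtain k where k: "k \<in> K" "s \<in> k" by blast
    then have "ev Z p k" using UN.IH by simp
    moreover have "k \<subseteq> \<Union>K" using k(1) by (rule Union_upper)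
    ultimately show "ev Z p (\<Union>K)" by (rule ev_mono)
  qed
next
  case (Basis W) then show ?case using assms(2) by simp
qed

lemma cons_top: "topspace (cons_topology X) = topspace X"
proof -
  have "openin X {}" "compactin X {}" by auto
  then have "topspace X - {} \<in> {topspace X - U | U. openin X U \<and> compactin X U}" by auto
  moreover have "\<Union>({U. openin X U \<and> compactin X U} \<union> {topspace X - U | U. openin X U \<and> compactin X U})
     \<subseteq> topspace X" using openin_subset by auto
  moreover have "topspace X \<subseteq> \<Union>({U. openin X U \<and> compactin X U} \<union> {topspace X - U | U. openin X U \<and> compactin X U})"
    using calculation(1) Union_upper[of "topspace X - {}"] by auto
  ultimately show ?thesis unfolding cons_topology_def topology_generated_by_topspace by (intro equalityI) (simp_all only:)
qed

lemma ev_closure: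
  assumes sT: "s \<in> topspace X"
    and bas1: "\<And>U. openin X U \<Longrightarrow> compactin X U \<Longrightarrow> s \<in> U \<Longrightarrow> ev Z p U"
    and bas2: "\<And>U. openin X U \<Longrightarrow> compactin X U \<Longrightarrow> s \<notin> U \<Longrightarrow> ev Z p (topspace X - U)"
    and inS: "\<And>F. F \<subseteq> Z \<Longrightarrow> F \<noteq> {} \<Longrightarrow> finite F \<Longrightarrow> p F \<in> S"
  shows "s \<in> (cons_topology X) closure_of S"
  unfolding in_closure_of
proof (intro conjI allI impI)
  show "s \<in> topspace (cons_topology X)" using cons_top[of X] sT by metis
next
  fix T assume T: "s \<in> T \<and> openin (cons_topology X) T"
  then have gen: "generate_topology_on ({U. openin X U \<and> compactin X U} \<union>
        {topspace X - U | U. openin X U \<and> compactin X U}) T"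
    unfolding cons_topology_def using openin_topology_generated_by by auto
  have basev: "ev Z p W" if W: "W \<in> {U. openin X U \<and> compactin X U} \<union>
        {topspace X - U | U. openin X U \<and> compactin X U}" and sW: "s \<in> W" for W
  proof (cases "W \<in> {U. openin X U \<and> compactin X U}")
    case True
    then show ?thesis using bas1 sW by simp
  next
    case False
    then have "W \<in> {topspace X - U | U. openin X U \<and> compactin X U}" using W by (simp only: Un_iff) blast
    then obtain U where U: "W = topspace X - U" "openin X U" "compactin X U"
      unfolding mem_Collect_eq by (elim exE conjE)
    then show ?thesis using bas2 sW by simp
  qed
  have "s \<in> T \<longrightarrow> ev Z p T" by (rule gen_ev[OF gen basev])
  then have "ev Z p T" using T by simp
  then obtain F0 where F0: "F0 \<subseteq> Z" "F0 \<noteq> {}" "finite F0"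
      "\<And>F. F0 \<subseteq> F \<Longrightarrow> F \<subseteq> Z \<Longrightarrow> finite F \<Longrightarrow> p F \<in> T"
    by (elim evE) blast
  have "p F0 \<in> T" using F0(4)[of F0] F0(1,3) by simp
  moreover have "p F0 \<in> S" using inS F0(1-3) by simp
  ultimately show "\<exists>y. y \<in> S \<and> y \<in> T" by blast
qed

locale spx =
  fixes X :: "'a topology" and R :: "('b, 'c) ring_scheme" (structure) and h :: "'a \<Rightarrow> 'b set"
  assumes cr: "cring R"
  and K1: "\<And>x. x \<in> topspace X \<Longrightarrow> primeideal (h x) R"
  and K2: "\<And>P. primeideal P R \<Longrightarrow> \<exists>x\<in>topspace X. h x = P"
  and K3: "\<And>x y. x \<in> topspace X \<Longrightarrow> y \<in> topspace X \<Longrightarrow> h x = h y \<Longrightarrow> x = y"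
  and K4: "\<And>x y. spec_le X x y \<longleftrightarrow> x \<in> topspace X \<and> y \<in> topspace X \<and> h x \<subseteq> h y"
  and K5: "\<And>U x. openin X U \<Longrightarrow> x \<in> U \<Longrightarrow>
             \<exists>g\<in>carrier R. g \<notin> h x \<and> (\<forall>y\<in>topspace X. g \<notin> h y \<longrightarrow> y \<in> U)"
  and K6: "\<And>g. g \<in> carrier R \<Longrightarrow> openin X {y \<in> topspace X. g \<notin> h y}"
begin

lemma down:
  assumes "openin X U" "y \<in> U" "x \<in> topspace X" "h x \<subseteq> h y"
  shows "x \<in> U"
proof -
  obtain g where g: "g \<in> carrier R" "g \<notin> h y" "\<forall>z\<in>topspace X. g \<notin> h z \<longrightarrow> z \<in> U"
    using K5[OF assms(1,2)] by auto
  have "g \<notin> h x" using g(2) assms(4) by auto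
  then show ?thesis using g(3) assms(3) by simp
qed

lemma sup_unique:
  assumes "is_sup X Z s" "is_sup X Z t" shows "s = t"
proof -
  have "spec_le X s t" "spec_le X t s" using assms unfolding is_sup_def by auto
  then have "h s = h t" "s \<in> topspace X" "t \<in> topspace X" using K4 by auto
  then show ?thesis using K3 by simp
qed

lemma inf_unique:
  assumes "is_inf X Z s" "is_inf X Z t" shows "s = t"
proof -
  have "spec_le X s t" "spec_le X t s" using assms unfolding is_inf_def by auto
  then have "h s = h t" "s \<in> topspace X" "t \<in> topspace X" using K4 by auto
  then show ?thesis using K3 by simp
qed



lemma sup_part:
  assumes Y: "Y \<subseteq> topspace X"
    and fin: "\<forall>F. F \<subseteq> Y \<and> F \<noteq> {} \<and> finite F \<longrightarrow> (\<exists>s. is_sup X F s)"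
  shows "(\<forall>Z. Z \<subseteq> Y \<and> Z \<noteq> {} \<longrightarrow> (\<exists>s. is_sup X Z s)) \<and>
         sup_all X Y \<subseteq> (cons_topology X) closure_of (sup_fin X Y)"
proof -
  define p where "p F = (SOME s. is_sup X F s)" for F
  have pS: "is_sup X F (p F)" if "F \<subseteq> Y" "F \<noteq> {}" "finite F" for F
  proof -
    have "\<exists>s. is_sup X F s" using fin that by auto
    then show ?thesis unfolding p_def by (rule someI_ex)
  qed
  have pT: "p F \<in> topspace X" if "F \<subseteq> Y" "F \<noteq> {}" "finite F" for F
    using pS[OF that] unfolding is_sup_def by simp
  have pup: "h z \<subseteq> h (p F)" if "z \<in> F" "F \<subseteq> Y" "finite F" for z F
  proof -
    have "F \<noteq> {}" using that by auto
    then have "spec_le X z (p F)" using pS[OF that(2) _ that(3)] that(1) unfolding is_sup_def by auto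
    then show ?thesis using K4 by simp
  qed
  have pleast: "h (p F) \<subseteq> h u" if "F \<subseteq> Y" "F \<noteq> {}" "finite F" "u \<in> topspace X"
    "\<forall>z\<in>F. h z \<subseteq> h u" for F u
  proof -
    have "\<forall>z\<in>F. spec_le X z u" using that Y K4 by auto
    then have "spec_le X (p F) u" using pS[OF that(1-3)] that(4) unfolding is_sup_def by auto
    then show ?thesis using K4 by simp
  qed
  have pmono: "h (p F) \<subseteq> h (p G)" if "F \<subseteq> G" "G \<subseteq> Y" "F \<noteq> {}" "finite G" for F G
  proof -
    have F: "F \<subseteq> Y" "finite F" using that finite_subset by auto
    have "G \<noteq> {}" using that by auto
    have "\<forall>z\<in>F. h z \<subseteq> h (p G)" using pup that by auto
    then show ?thesis using pleast[OF F(1) that(3) F(2) pT[OF that(2) \<open>G \<noteq> {}\<close> that(4)]] by simp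
  qed
  have key: "\<exists>x. is_sup X Z x \<and> h x = \<Union>{h (p F) | F. F \<subseteq> Z \<and> F \<noteq> {} \<and> finite F}"
    if Z: "Z \<subseteq> Y" "Z \<noteq> {}" for Z
  proof -
    let ?PP = "{h (p F) | F. F \<subseteq> Z \<and> F \<noteq> {} \<and> finite F}"
    obtain z0 where z0: "z0 \<in> Z" using Z by auto
    have ne: "?PP \<noteq> {}" using z0 by auto
    have pr: "primeideal P R" if PP: "P \<in> ?PP" for P
    proof -
      obtain F where F: "P = h (p F)" "F \<subseteq> Z" "F \<noteq> {}" "finite F" using PP by auto
      show ?thesis using K1[OF pT] F Z by auto
    qed
    have dir: "\<exists>M\<in>?PP. P \<subseteq> M \<and> Q \<subseteq> M" if PQ: "P \<in> ?PP" "Q \<in> ?PP" for P Q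
    proof -
      obtain F where F: "P = h (p F)" "F \<subseteq> Z" "F \<noteq> {}" "finite F" using PQ(1) by auto
      obtain G where G: "Q = h (p G)" "G \<subseteq> Z" "G \<noteq> {}" "finite G" using PQ(2) by auto
      have "h (p (F \<union> G)) \<in> ?PP" using F G by auto
      moreover have "P \<subseteq> h (p (F \<union> G))" using pmono[of F "F \<union> G"] F G Z by auto
      moreover have "Q \<subseteq> h (p (F \<union> G))" using pmono[of G "F \<union> G"] F G Z by auto
      ultimately show ?thesis by blast
    qed
    have "primeideal (\<Union>?PP) R" by (rule directed_union_prime[OF cr ne pr dir])
    from K2[OF this] obtain x where x: "x \<in> topspace X" "h x = \<Union>?PP" by auto
    have "is_sup X Z x"
      unfolding is_sup_def
    proof (intro conjI ballI impI)
      show "x \<in> topspace X" by fact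
    next
      fix z assume z: "z \<in> Z"
      have "h (p {z}) \<in> ?PP" using z by auto
      then have "h (p {z}) \<subseteq> h x" using x(2) by auto
      moreover have "h z \<subseteq> h (p {z})" using pup[of z "{z}"] z Z by auto
      ultimately show "spec_le X z x" using K4 x(1) z Z Y by auto
    next
      fix u assume u: "u \<in> topspace X" "\<forall>z\<in>Z. spec_le X z u"
      have "P \<subseteq> h u" if PP: "P \<in> ?PP" for P
      proof -
        obtain F where F: "P = h (p F)" "F \<subseteq> Z" "F \<noteq> {}" "finite F" using PP by auto
        have "\<forall>z\<in>F. h z \<subseteq> h u" using u(2) F(2) K4 by auto
        then show ?thesis using pleast[of F u] F Z u(1) by auto
      qed
      then have "h x \<subseteq> h u" using x(2) by auto
      then show "spec_le X x u" using K4 x(1) u(1) by auto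
    qed
    then show ?thesis using x(2) by auto
  qed
  have part1: "\<forall>Z. Z \<subseteq> Y \<and> Z \<noteq> {} \<longrightarrow> (\<exists>s. is_sup X Z s)"
  proof (intro allI impI)
    fix Z assume "Z \<subseteq> Y \<and> Z \<noteq> {}"
    then have "\<exists>x. is_sup X Z x \<and> h x = \<Union>{h (p F) | F. F \<subseteq> Z \<and> F \<noteq> {} \<and> finite F}"
      using key by simp
    then show "\<exists>s. is_sup X Z s" by auto
  qed
  have part2: "s \<in> (cons_topology X) closure_of (sup_fin X Y)" if s: "s \<in> sup_all X Y" for s
  proof -
    obtain Z where Z: "Z \<subseteq> Y" "Z \<noteq> {}" "is_sup X Z s" using s unfolding sup_all_def by auto
    obtain z0 where z0: "z0 \<in> Z" using Z by auto
    obtain x where x: "is_sup X Z x" "h x = \<Union>{h (p F) | F. F \<subseteq> Z \<and> F \<noteq> {} \<and> finite F}"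
      using key[OF Z(1,2)] by auto
    have "s = x" using sup_unique[OF Z(3) x(1)] .
    then have hs: "h s = \<Union>{h (p F) | F. F \<subseteq> Z \<and> F \<noteq> {} \<and> finite F}" using x(2) by simp
    have sT: "s \<in> topspace X" using Z(3) unfolding is_sup_def by simp
    have hpF: "h (p F) \<subseteq> h s" if "F \<subseteq> Z" "F \<noteq> {}" "finite F" for F
    proof -
      have "h (p F) \<in> {h (p F) | F. F \<subseteq> Z \<and> F \<noteq> {} \<and> finite F}" using that by blast
      then show ?thesis unfolding hs by (rule Union_upper)
    qed
    have pTZ: "p F \<in> topspace X" if "F \<subseteq> Z" "F \<noteq> {}" "finite F" for F
    proof -
      have "F \<subseteq> Y" using that(1) Z(1) by (rule subset_trans)
      then show ?thesis using pT that(2,3) by simp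
    qed
    show ?thesis
    proof (rule ev_closure[of s X Z p])
      show "s \<in> topspace X" by fact
    next
      fix F assume F: "F \<subseteq> Z" "F \<noteq> {}" "finite F"
      have F0Y: "F \<subseteq> Y" using F(1) Z(1) by (rule subset_trans)
      have "is_sup X F (p F)" using pS[OF F0Y F(2,3)] .
      then show "p F \<in> sup_fin X Y" unfolding sup_fin_def using F0Y F(2,3) by blast
    next
      fix W assume W: "openin X W" "compactin X W" "s \<in> W"
      show "ev Z p W"
      proof (rule evI[of "{z0}"])
        fix F assume F: "{z0} \<subseteq> F" "F \<subseteq> Z" "finite F"
        have "F \<noteq> {}" using F(1) by auto
        then show "p F \<in> W" using down[OF W(1) W(3) pTZ[OF F(2) _ F(3)] hpF[OF F(2) _ F(3)]] by simp
      qed (use z0 in auto)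
    next
      fix V assume V: "openin X V" "compactin X V" "s \<notin> V"
      define UU where "UU = {{y \<in> topspace X. g \<notin> h y} | g. g \<in> carrier R \<and> {y \<in> topspace X. g \<notin> h y} \<subseteq> V}"
      have UUo: "\<forall>Ob\<in>UU. openin X Ob" unfolding UU_def using K6 by auto
      have "V \<subseteq> \<Union>UU"
      proof
        fix v assume v: "v \<in> V"
        then have vT: "v \<in> topspace X" using openin_subset[OF V(1)] by auto
        obtain g where g: "g \<in> carrier R" "g \<notin> h v" "\<forall>y\<in>topspace X. g \<notin> h y \<longrightarrow> y \<in> V"
          using K5[OF V(1) v] by auto
        have sub: "{y \<in> topspace X. g \<notin> h y} \<subseteq> V" using g(3) by auto
        have "{y \<in> topspace X. g \<notin> h y} \<in> UU" unfolding UU_def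
          by (rule CollectI, rule exI[of _ g]) (simp add: g(1) sub)
        moreover have "v \<in> {y \<in> topspace X. g \<notin> h y}" using vT g(2) by simp
        ultimately show "v \<in> \<Union>UU" by (rule UnionI)
      qed
      moreover have "\<forall>UU. (\<forall>U\<in>UU. openin X U) \<and> V \<subseteq> \<Union>UU \<longrightarrow> (\<exists>GG. finite GG \<and> GG \<subseteq> UU \<and> V \<subseteq> \<Union>GG)"
        using V(2) unfolding compactin_def by simp
      ultimately have "\<exists>GG. finite GG \<and> GG \<subseteq> UU \<and> V \<subseteq> \<Union>GG"
        using UUo by simp
      then obtain GG where GG: "finite GG" "GG \<subseteq> UU" "V \<subseteq> \<Union>GG"
        by blast
      have evO: "ev Z p (topspace X - Ob)" if Ob: "Ob \<in> GG" for Ob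
      proof -
        have "Ob \<in> UU" using GG(2) Ob by (rule subsetD)
        then obtain g where g: "g \<in> carrier R" "Ob = {y \<in> topspace X. g \<notin> h y}" "Ob \<subseteq> V"
          unfolding UU_def by blast
        have "g \<in> h s"
        proof (rule ccontr)
          assume "g \<notin> h s"
          then have "s \<in> Ob" using g(2) sT by simp
          then show False using g(3) V(3) by blast
        qed
        then have "g \<in> \<Union>{h (p F) | F. F \<subseteq> Z \<and> F \<noteq> {} \<and> finite F}"
          using hs by simp
        then obtain F where F: "F \<subseteq> Z" "F \<noteq> {}" "finite F" "g \<in> h (p F)"
          by blast
        show ?thesis
        proof (rule evI[of F])
          fix F' assume F': "F \<subseteq> F'" "F' \<subseteq> Z" "finite F'"
          have F'Y: "F' \<subseteq> Y" using F'(2) Z(1) by (rule subset_trans)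
          have "h (p F) \<subseteq> h (p F')" using pmono[OF F'(1) F'Y F(2) F'(3)] .
          then have "g \<in> h (p F')" using F(4) by blast
          moreover have "F' \<noteq> {}" using F'(1) F(2) by blast
          ultimately show "p F' \<in> topspace X - Ob" using g(2) pTZ[OF F'(2) _ F'(3)] by simp
        qed (use F in auto)
      qed
      have "ev Z p (topspace X - \<Union>GG)"
        using GG(1) evO
      proof (induction GG rule: finite_induct)
        case empty
        show ?case
        proof (rule evI[of "{z0}"])
          fix F assume F: "{z0} \<subseteq> F" "F \<subseteq> Z" "finite F"
          have "F \<noteq> {}" using F(1) by auto
          then show "p F \<in> topspace X - \<Union>{}" using pTZ[OF F(2) _ F(3)] by simp
        qed (use z0 in auto)
      next
        case (insert Ob GG)
        have "ev Z p (topspace X - Ob)" using insert.prems by simp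
        moreover have "ev Z p (topspace X - \<Union>GG)" using insert.IH insert.prems by simp
        ultimately have "ev Z p ((topspace X - Ob) \<inter> (topspace X - \<Union>GG))" by (rule ev_Int)
        moreover have "(topspace X - Ob) \<inter> (topspace X - \<Union>GG) = topspace X - \<Union>(insert Ob GG)" by auto
        ultimately show ?case by simp
      qed
      moreover have "topspace X - \<Union>GG \<subseteq> topspace X - V" using GG(3) by blast
      ultimately show "ev Z p (topspace X - V)" by (rule ev_mono)
    qed
  qed
  show ?thesis using part1 part2 by auto
qed


lemma inf_part:
  assumes Y: "Y \<subseteq> topspace X"
    and fin: "\<forall>F. F \<subseteq> Y \<and> F \<noteq> {} \<and> finite F \<longrightarrow> (\<exists>s. is_inf X F s)"
  shows "(\<forall>Z. Z \<subseteq> Y \<and> Z \<noteq> {} \<longrightarrow> (\<exists>s. is_inf X Z s)) \<and>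
         inf_all X Y \<subseteq> (cons_topology X) closure_of (inf_fin X Y)"
proof -
  define p where "p F = (SOME s. is_inf X F s)" for F
  have pS: "is_inf X F (p F)" if "F \<subseteq> Y" "F \<noteq> {}" "finite F" for F
  proof -
    have "\<exists>s. is_inf X F s" using fin that by auto
    then show ?thesis unfolding p_def by (rule someI_ex)
  qed
  have pT: "p F \<in> topspace X" if "F \<subseteq> Y" "F \<noteq> {}" "finite F" for F
    using pS[OF that] unfolding is_inf_def by simp
  have plow: "h (p F) \<subseteq> h z" if "z \<in> F" "F \<subseteq> Y" "finite F" for z F
  proof -
    have "F \<noteq> {}" using that by auto
    then have "spec_le X (p F) z" using pS[OF that(2) _ that(3)] that(1) unfolding is_inf_def by auto
    then show ?thesis using K4 by simp
  qed
  have pgreat: "h u \<subseteq> h (p F)" if "F \<subseteq> Y" "F \<noteq> {}" "finite F" "u \<in> topspace X"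
    "\<forall>z\<in>F. h u \<subseteq> h z" for F u
  proof -
    have "\<forall>z\<in>F. spec_le X u z" using that Y K4 by auto
    then have "spec_le X u (p F)" using pS[OF that(1-3)] that(4) unfolding is_inf_def by auto
    then show ?thesis using K4 by simp
  qed
  have pmono: "h (p G) \<subseteq> h (p F)" if "F \<subseteq> G" "G \<subseteq> Y" "F \<noteq> {}" "finite G" for F G
  proof -
    have F: "F \<subseteq> Y" "finite F" using that finite_subset by auto
    have "G \<noteq> {}" using that by auto
    have "\<forall>z\<in>F. h (p G) \<subseteq> h z" using plow that by auto
    then show ?thesis using pgreat[OF F(1) that(3) F(2) pT[OF that(2) \<open>G \<noteq> {}\<close> that(4)]] by simp
  qed
  have key: "\<exists>x. is_inf X Z x \<and> h x = \<Inter>{h (p F) | F. F \<subseteq> Z \<and> F \<noteq> {} \<and> finite F}"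
    if Z: "Z \<subseteq> Y" "Z \<noteq> {}" for Z
  proof -
    let ?PP = "{h (p F) | F. F \<subseteq> Z \<and> F \<noteq> {} \<and> finite F}"
    obtain z0 where z0: "z0 \<in> Z" using Z by auto
    have ne: "?PP \<noteq> {}" using z0 by auto
    have pr: "primeideal P R" if PP: "P \<in> ?PP" for P
    proof -
      obtain F where F: "P = h (p F)" "F \<subseteq> Z" "F \<noteq> {}" "finite F" using PP by auto
      show ?thesis using K1[OF pT] F Z by auto
    qed
    have dir: "\<exists>M\<in>?PP. M \<subseteq> P \<and> M \<subseteq> Q" if PQ: "P \<in> ?PP" "Q \<in> ?PP" for P Q
    proof -
      obtain F where F: "P = h (p F)" "F \<subseteq> Z" "F \<noteq> {}" "finite F" using PQ(1) by auto
      obtain G where G: "Q = h (p G)" "G \<subseteq> Z" "G \<noteq> {}" "finite G" using PQ(2) by auto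
      have "h (p (F \<union> G)) \<in> ?PP" using F G by auto
      moreover have "h (p (F \<union> G)) \<subseteq> P" using pmono[of F "F \<union> G"] F G Z by auto
      moreover have "h (p (F \<union> G)) \<subseteq> Q" using pmono[of G "F \<union> G"] F G Z by auto
      ultimately show ?thesis by blast
    qed
    have "primeideal (\<Inter>?PP) R" by (rule codirected_inter_prime[OF cr ne pr dir])
    from K2[OF this] obtain x where x: "x \<in> topspace X" "h x = \<Inter>?PP" by auto
    have "is_inf X Z x"
      unfolding is_inf_def
    proof (intro conjI ballI impI)
      show "x \<in> topspace X" by fact
    next
      fix z assume z: "z \<in> Z"
      have "h (p {z}) \<in> ?PP" using z by auto
      then have "h x \<subseteq> h (p {z})" using x(2) by auto
      moreover have "h (p {z}) \<subseteq> h z" using plow[of z "{z}"] z Z by auto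
      ultimately show "spec_le X x z" using K4 x(1) z Z Y by auto
    next
      fix u assume u: "u \<in> topspace X" "\<forall>z\<in>Z. spec_le X u z"
      have "h u \<subseteq> P" if PP: "P \<in> ?PP" for P
      proof -
        obtain F where F: "P = h (p F)" "F \<subseteq> Z" "F \<noteq> {}" "finite F" using PP by auto
        have "\<forall>z\<in>F. h u \<subseteq> h z" using u(2) F(2) K4 by auto
        then show ?thesis using pgreat[of F u] F Z u(1) by auto
      qed
      then have "h u \<subseteq> h x" using x(2) by auto
      then show "spec_le X u x" using K4 x(1) u(1) by auto
    qed
    then show ?thesis using x(2) by auto
  qed
  have part1: "\<forall>Z. Z \<subseteq> Y \<and> Z \<noteq> {} \<longrightarrow> (\<exists>s. is_inf X Z s)"
  proof (intro allI impI)
    fix Z assume "Z \<subseteq> Y \<and> Z \<noteq> {}"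
    then have "\<exists>x. is_inf X Z x \<and> h x = \<Inter>{h (p F) | F. F \<subseteq> Z \<and> F \<noteq> {} \<and> finite F}"
      using key by simp
    then show "\<exists>s. is_inf X Z s" by auto
  qed
  have part2: "s \<in> (cons_topology X) closure_of (inf_fin X Y)" if s: "s \<in> inf_all X Y" for s
  proof -
    obtain Z where Z: "Z \<subseteq> Y" "Z \<noteq> {}" "is_inf X Z s" using s unfolding inf_all_def by auto
    obtain z0 where z0: "z0 \<in> Z" using Z by auto
    obtain x where x: "is_inf X Z x" "h x = \<Inter>{h (p F) | F. F \<subseteq> Z \<and> F \<noteq> {} \<and> finite F}"
      using key[OF Z(1,2)] by auto
    have "s = x" using inf_unique[OF Z(3) x(1)] .
    then have hs: "h s = \<Inter>{h (p F) | F. F \<subseteq> Z \<and> F \<noteq> {} \<and> finite F}" using x(2) by simp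
    have sT: "s \<in> topspace X" using Z(3) unfolding is_inf_def by simp
    have hpF: "h s \<subseteq> h (p F)" if "F \<subseteq> Z" "F \<noteq> {}" "finite F" for F
    proof -
      have "h (p F) \<in> {h (p F) | F. F \<subseteq> Z \<and> F \<noteq> {} \<and> finite F}" using that by blast
      then show ?thesis unfolding hs by (rule Inter_lower)
    qed
    have pTZ: "p F \<in> topspace X" if "F \<subseteq> Z" "F \<noteq> {}" "finite F" for F
    proof -
      have "F \<subseteq> Y" using that(1) Z(1) by (rule subset_trans)
      then show ?thesis using pT that(2,3) by simp
    qed
    show ?thesis
    proof (rule ev_closure[of s X Z p])
      show "s \<in> topspace X" by fact
    next
      fix F assume F: "F \<subseteq> Z" "F \<noteq> {}" "finite F"
      have F0Y: "F \<subseteq> Y" using F(1) Z(1) by (rule subset_trans)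
      have "is_inf X F (p F)" using pS[OF F0Y F(2,3)] .
      then show "p F \<in> inf_fin X Y" unfolding inf_fin_def using F0Y F(2,3) by blast
    next
      fix V assume V: "openin X V" "compactin X V" "s \<notin> V"
      show "ev Z p (topspace X - V)"
      proof (rule evI[of "{z0}"])
        fix F assume F: "{z0} \<subseteq> F" "F \<subseteq> Z" "finite F"
        have Fne: "F \<noteq> {}" using F(1) by auto
        have pFT: "p F \<in> topspace X" using pTZ[OF F(2) Fne F(3)] .
        have "p F \<notin> V"
        proof
          assume "p F \<in> V"
          then have "s \<in> V" using down[OF V(1) _ sT hpF[OF F(2) Fne F(3)]] by simp
          then show False using V(3) by simp
        qed
        then show "p F \<in> topspace X - V" using pFT by simp
      qed (use z0 in auto)
    next
      fix W assume W: "openin X W" "compactin X W" "s \<in> W"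
      obtain g where g: "g \<in> carrier R" "g \<notin> h s" "\<forall>y\<in>topspace X. g \<notin> h y \<longrightarrow> y \<in> W"
        using K5[OF W(1) W(3)] by auto
      have "g \<notin> \<Inter>{h (p F) | F. F \<subseteq> Z \<and> F \<noteq> {} \<and> finite F}"
        using g(2) hs by simp
      then obtain F1 where F1: "F1 \<subseteq> Z" "F1 \<noteq> {}" "finite F1" "g \<notin> h (p F1)"
        by blast
      show "ev Z p W"
      proof (rule evI[of F1])
        fix F assume F: "F1 \<subseteq> F" "F \<subseteq> Z" "finite F"
        have FY: "F \<subseteq> Y" using F(2) Z(1) by (rule subset_trans)
        have Fne: "F \<noteq> {}" using F(1) F1(2) by blast
        have "h (p F) \<subseteq> h (p F1)" using pmono[OF F(1) FY F1(2) F(3)] .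
        then have "g \<notin> h (p F)" using F1(4) by blast
        then show "p F \<in> W" using g(3) pTZ[OF F(2) Fne F(3)] by simp
      qed (use F1 in auto)
    qed
  qed
  show ?thesis using part1 part2 by auto
qed

end

theorem theorem3p1:
  fixes X :: "'a topology" and R :: "('b, 'c) ring_scheme" and Y :: "'a set"
  assumes "cring R"
    and "X homeomorphic_space zariski R"
    and "Y \<subseteq> topspace X"
  shows "((\<forall>F. F \<subseteq> Y \<and> F \<noteq> {} \<and> finite F \<longrightarrow> (\<exists>s. is_sup X F s)) \<longrightarrow>
           (\<forall>Z. Z \<subseteq> Y \<and> Z \<noteq> {} \<longrightarrow> (\<exists>s. is_sup X Z s)) \<and>
           sup_all X Y \<subseteq> (cons_topology X) closure_of (sup_fin X Y))
       \<and> ((\<forall>F. F \<subseteq> Y \<and> F \<noteq> {} \<and> finite F \<longrightarrow> (\<exists>s. is_inf X F s)) \<longrightarrow>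
           (\<forall>Z. Z \<subseteq> Y \<and> Z \<noteq> {} \<longrightarrow> (\<exists>s. is_inf X Z s)) \<and>
           inf_all X Y \<subseteq> (cons_topology X) closure_of (inf_fin X Y))"
proof -
  note cr = assms(1)
  obtain f g where fg: "homeomorphic_maps X (zariski R) f g"
    using assms(2) unfolding homeomorphic_space_def by blast
  have hm: "homeomorphic_map X (zariski R) f" using fg homeomorphic_maps_map by blast
  have top: "topspace (zariski R) = Spec R" by (rule zar_top[OF cr])
  have surj: "f ` topspace X = Spec R" using homeomorphic_imp_surjective_map[OF hm] top by simp
  have inj: "inj_on f (topspace X)" by (rule homeomorphic_imp_injective_map[OF hm])
  have cont: "continuous_map X (zariski R) f" by (rule homeomorphic_imp_continuous_map[OF hm])
  have fS: "f x \<in> Spec R" if "x \<in> topspace X" for x using surj that by blast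
  have K1: "primeideal (f x) R" if "x \<in> topspace X" for x
    using fS[OF that] by (simp add: Spec_def)
  have K2: "\<exists>x\<in>topspace X. f x = P" if "primeideal P R" for P
  proof -
    have "P \<in> f ` topspace X" using that surj by (simp add: Spec_def)
    then show ?thesis by blast
  qed
  have K3: "x = y" if "x \<in> topspace X" "y \<in> topspace X" "f x = f y" for x y
    using inj that by (simp add: inj_on_def)
  have K4: "spec_le X x y \<longleftrightarrow> x \<in> topspace X \<and> y \<in> topspace X \<and> f x \<subseteq> f y" for x y
  proof (cases "x \<in> topspace X")
    case False
    then show ?thesis unfolding spec_le_def by simp
  next
    case xT: True
    have cl: "zariski R closure_of (f ` {x}) = f ` (X closure_of {x})"
      using homeomorphic_map_closure_of[OF hm, of "{x}"] xT by simp
    have "y \<in> X closure_of {x} \<longleftrightarrow> y \<in> topspace X \<and> f y \<in> zariski R closure_of {f x}"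
    proof
      assume y: "y \<in> X closure_of {x}"
      then have "y \<in> topspace X" by (rule subsetD[OF closure_of_subset_topspace])
      moreover have "f y \<in> zariski R closure_of {f x}" using y cl by simp
      ultimately show "y \<in> topspace X \<and> f y \<in> zariski R closure_of {f x}" by simp
    next
      assume y: "y \<in> topspace X \<and> f y \<in> zariski R closure_of {f x}"
      then have "f y \<in> f ` (X closure_of {x})" using cl by simp
      then obtain y' where y': "y' \<in> X closure_of {x}" "f y = f y'" by blast
      have "y' \<in> topspace X" using y'(1) by (rule subsetD[OF closure_of_subset_topspace])
      then have "y = y'" using K3 y y'(2) by simp
      then show "y \<in> X closure_of {x}" using y'(1) by simp
    qed
    moreover have "f y \<in> zariski R closure_of {f x} \<longleftrightarrow> f x \<subseteq> f y" if "y \<in> topspace X"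
      using zar_closure[OF cr fS[OF xT] fS[OF that]] .
    ultimately show ?thesis unfolding spec_le_def using xT by blast
  qed
  have K5: "\<exists>g\<in>carrier R. g \<notin> f x \<and> (\<forall>y\<in>topspace X. g \<notin> f y \<longrightarrow> y \<in> U)"
    if U: "openin X U" "x \<in> U" for U x
  proof -
    have UT: "U \<subseteq> topspace X" using openin_subset[OF U(1)] .
    have "openin (zariski R) (f ` U)" using homeomorphic_map_openness[OF hm UT] U(1) by simp
    then have "\<forall>Q\<in>f ` U. Q \<in> Spec R \<and> (\<exists>g\<in>carrier R. g \<notin> Q \<and> {P \<in> Spec R. g \<notin> P} \<subseteq> f ` U)"
      by (rule zar_open[OF cr])
    moreover have "f x \<in> f ` U" using U(2) by simp
    ultimately obtain g where g: "g \<in> carrier R" "g \<notin> f x" "{P \<in> Spec R. g \<notin> P} \<subseteq> f ` U"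
      by blast
    have "y \<in> U" if y: "y \<in> topspace X" "g \<notin> f y" for y
    proof -
      have "f y \<in> {P \<in> Spec R. g \<notin> P}" using fS[OF y(1)] y(2) by simp
      then have "f y \<in> f ` U" using g(3) by blast
      then obtain y' where y': "y' \<in> U" "f y = f y'" by blast
      then have "y = y'" using K3 y(1) UT by blast
      then show ?thesis using y'(1) by simp
    qed
    then show ?thesis using g(1,2) by blast
  qed
  have K6: "openin X {y \<in> topspace X. g \<notin> f y}" if g: "g \<in> carrier R" for g
  proof -
    have "{P \<in> Spec R. g \<notin> P} \<in> {{P \<in> Spec R. f \<notin> P} | f. f \<in> carrier R}"
      using g by auto
    then have op: "openin (zariski R) {P \<in> Spec R. g \<notin> P}"
      unfolding zariski_def by (rule topology_generated_by_Basis)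
    have "openin X {y \<in> topspace X. f y \<in> {P \<in> Spec R. g \<notin> P}}"
      by (rule openin_continuous_map_preimage[OF cont op])
    moreover have "{y \<in> topspace X. f y \<in> {P \<in> Spec R. g \<notin> P}} = {y \<in> topspace X. g \<notin> f y}"
      using fS by auto
    ultimately show ?thesis by simp
  qed
  interpret spx X R f
    by (rule spx.intro[OF cr K1 K2 K3 K4 K5 K6]) (assumption+)
  show ?thesis using sup_part[OF assms(3)] inf_part[OF assms(3)] by blast
qed


end
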